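(* Let $X$ be a standard Gaussian random vector in $\mathbb{R}^n$ and, for $p\ge1$, $\|x\|_p=(\sum_{i=1}^n|x_i|^p)^{1/p}$. There exist numerical constants $C,c>0$ and $N_0$, independent of $p$ and $n$, such that for all $n\ge N_0$ and all $p>c\log n$, $$ {\rm Var}(\|X\|_p)\le\frac{C}{\log n}. $$ *)

theory Defs
  imports "HOL-Probability.Probability"
begin

definition std_gaussian :: "nat \<Rightarrow> (nat \<Rightarrow> real) measure" where
  "std_gaussian n = PiM {..<n} (\<lambda>_. density lborel std_normal_density)"

definition lp_norm :: "nat \<Rightarrow> real \<Rightarrow> (nat \<Rightarrow> real) \<Rightarrow> real" where
  "lp_norm n p x = (\<Sum>i<n. \<bar>x i\<bar> powr p) powr (1 / p)"

definition var :: "'a measure \<Rightarrow> ('a \<Rightarrow> real) \<Rightarrow> real" where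
  "var M f = (\<integral>x. (f x - (\<integral>y. f y \<partial>M))\<^sup>2 \<partial>M)"

end

theory Submission
  imports Defs "HOL-Real_Asymp.Real_Asymp"
begin

lemma exp_right_int:
  fixes l u :: real assumes l: "l > 0"
  shows "(\<integral>\<^sup>+y. ennreal (exp (- l * (y - u))) * indicator {u..} y \<partial>lborel) = ennreal (1 / l)"
proof -
  have "(\<integral>\<^sup>+y. ennreal (exp (- l * (y - u))) * indicator {u..} y \<partial>lborel)
     = ennreal (0 - (- exp (- l * (u - u)) / l))"
  proof (rule nn_integral_FTC_atLeast[where F="\<lambda>y. - exp (- l * (y - u)) / l" and T=0])
    show "((\<lambda>y. - exp (- l * (y - u)) / l) \<longlongrightarrow> 0) at_top"
      using l by real_asymp
  qed (use l in \<open>auto intro!: derivative_eq_intros\<close>)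
  then show ?thesis by simp
qed

lemma exp_left_int:
  fixes l u :: real assumes l: "l > 0"
  shows "(\<integral>\<^sup>+y. ennreal (exp (l * (y - u))) * indicator {..u} y \<partial>lborel) = ennreal (1 / l)"
proof -
  have "(\<integral>\<^sup>+y. ennreal (exp (l * (y - u))) * indicator {..u} y \<partial>lborel)
     = ennreal \<bar>-1\<bar> * (\<integral>\<^sup>+y. ennreal (exp (l * ((0 + -1 * y) - u))) * indicator {..u} (0 + -1 * y) \<partial>lborel)"
    by (rule nn_integral_real_affine) auto
  also have "\<dots> = (\<integral>\<^sup>+y. ennreal (exp (- l * (y - (-u)))) * indicator {-u..} y \<partial>lborel)"
    by (auto intro!: nn_integral_cong split: split_indicator simp: algebra_simps)
  also have "\<dots> = ennreal (1 / l)" using exp_right_int[OF l] .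
  finally show ?thesis .
qed

abbreviation "NN \<equiv> density lborel std_normal_density"

lemma phi_le: "std_normal_density y \<le> std_normal_density t * exp (t * (t - \<bar>y\<bar>))"
proof -
  have "- y\<^sup>2 / 2 \<le> - t\<^sup>2 / 2 + t * (t - \<bar>y\<bar>)"
  proof -
    have "0 \<le> (\<bar>y\<bar> - t)\<^sup>2" by simp
    then show ?thesis by (simp add: power2_eq_square algebra_simps abs_mult_self_eq)
  qed
  then have "exp (- y\<^sup>2 / 2) \<le> exp (- t\<^sup>2 / 2) * exp (t * (t - \<bar>y\<bar>))"
    by (simp add: exp_add[symmetric])
  then show ?thesis unfolding std_normal_density_def
    by (simp add: divide_right_mono mult.commute mult.left_commute)
qed

lemma G1:
  fixes t :: real assumes t: "t > 0"
  shows "emeasure NN {y. t < \<bar>y\<bar>} \<le> ennreal (2 * std_normal_density t / t)"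
proof -
  let ?c = "std_normal_density t"
  have "emeasure NN {y. t < \<bar>y\<bar>} = (\<integral>\<^sup>+y. ennreal (std_normal_density y) * indicator {y. t < \<bar>y\<bar>} y \<partial>lborel)"
    by (subst emeasure_density) auto
  also have "\<dots> \<le> (\<integral>\<^sup>+y. ennreal ?c * (ennreal (exp (- t * (y - t))) * indicator {t..} y)
      + ennreal ?c * (ennreal (exp (t * (y - (-t)))) * indicator {..-t} y) \<partial>lborel)"
  proof (intro nn_integral_mono)
    fix y :: real
    have pl: "std_normal_density y \<le> ?c * exp (t * (t - \<bar>y\<bar>))" by (rule phi_le)
    show "ennreal (std_normal_density y) * indicator {y. t < \<bar>y\<bar>} y \<le>
      ennreal ?c * (ennreal (exp (- t * (y - t))) * indicator {t..} y)
      + ennreal ?c * (ennreal (exp (t * (y - (-t)))) * indicator {..-t} y)"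
    proof (cases "t < \<bar>y\<bar>")
      case True
      show ?thesis
      proof (cases "y \<ge> 0")
        case True
        with \<open>t < \<bar>y\<bar>\<close> pl have "std_normal_density y \<le> ?c * exp (- t * (y - t))"
          by (simp add: algebra_simps)
        then have "ennreal (std_normal_density y) \<le> ennreal ?c * ennreal (exp (- t * (y - t)))"
          by (simp add: ennreal_mult[symmetric])
        moreover have "y \<in> {t..}" "y \<notin> {..-t}" using True \<open>t < \<bar>y\<bar>\<close> t by auto
        ultimately show ?thesis using \<open>t < \<bar>y\<bar>\<close> by simp
      next
        case False
        with \<open>t < \<bar>y\<bar>\<close> pl have "std_normal_density y \<le> ?c * exp (t * (y - (-t)))"
          by (simp add: algebra_simps)
        then have "ennreal (std_normal_density y) \<le> ennreal ?c * ennreal (exp (t * (y - (-t))))"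
          by (simp add: ennreal_mult[symmetric])
        moreover have "y \<notin> {t..}" "y \<in> {..-t}" using False \<open>t < \<bar>y\<bar>\<close> t by auto
        ultimately show ?thesis using \<open>t < \<bar>y\<bar>\<close> by simp
      qed
    qed simp
  qed
  also have "\<dots> = ennreal ?c * (\<integral>\<^sup>+y. ennreal (exp (- t * (y - t))) * indicator {t..} y \<partial>lborel)
      + ennreal ?c * (\<integral>\<^sup>+y. ennreal (exp (t * (y - (-t)))) * indicator {..-t} y \<partial>lborel)"
    by (simp add: nn_integral_add nn_integral_cmult)
  also have "\<dots> = ennreal ?c * ennreal (1 / t) + ennreal ?c * ennreal (1 / t)"
    by (simp only: exp_right_int[OF t] exp_left_int[OF t])
  also have "\<dots> = ennreal (2 * ?c / t)"
    using t by (simp add: ennreal_mult[symmetric] ennreal_plus[symmetric] del: ennreal_plus)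
  finally show ?thesis .
qed

lemma G2:
  fixes b :: real assumes b: "b > 0"
  shows "(\<integral>\<^sup>+y. ennreal (exp (2*b*(\<bar>y\<bar> - b))) * indicator {y. \<bar>y\<bar> \<le> b} y \<partial>NN)
     \<le> ennreal (2 * std_normal_density b / b)"
proof -
  let ?c = "std_normal_density b"
  have "(\<integral>\<^sup>+y. ennreal (exp (2*b*(\<bar>y\<bar> - b))) * indicator {y. \<bar>y\<bar> \<le> b} y \<partial>NN)
     = (\<integral>\<^sup>+y. ennreal (std_normal_density y) * (ennreal (exp (2*b*(\<bar>y\<bar> - b))) * indicator {y. \<bar>y\<bar> \<le> b} y) \<partial>lborel)"
    by (subst nn_integral_density) auto
  also have "\<dots> \<le> (\<integral>\<^sup>+y. ennreal ?c * (ennreal (exp (b * (y - b))) * indicator {..b} y)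
      + ennreal ?c * (ennreal (exp (- b * (y - (-b)))) * indicator {-b..} y) \<partial>lborel)"
  proof (intro nn_integral_mono)
    fix y :: real
    show "ennreal (std_normal_density y) * (ennreal (exp (2*b*(\<bar>y\<bar> - b))) * indicator {y. \<bar>y\<bar> \<le> b} y) \<le>
      ennreal ?c * (ennreal (exp (b * (y - b))) * indicator {..b} y)
      + ennreal ?c * (ennreal (exp (- b * (y - (-b)))) * indicator {-b..} y)"
    proof (cases "\<bar>y\<bar> \<le> b")
      case True
      have "std_normal_density y * exp (2*b*(\<bar>y\<bar> - b)) \<le> ?c * exp (b * (b - \<bar>y\<bar>)) * exp (2*b*(\<bar>y\<bar> - b))"
        by (rule mult_right_mono[OF phi_le]) simp
      also have "\<dots> = ?c * exp (b * (\<bar>y\<bar> - b))"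
        by (simp add: mult.assoc exp_add[symmetric] algebra_simps)
      finally have pl: "std_normal_density y * exp (2*b*(\<bar>y\<bar> - b)) \<le> ?c * exp (b * (\<bar>y\<bar> - b))" .
      show ?thesis
      proof (cases "y \<ge> 0")
        case True
        with pl have "std_normal_density y * exp (2*b*(\<bar>y\<bar> - b)) \<le> ?c * exp (b * (y - b))"
          by simp
        then have "ennreal (std_normal_density y) * ennreal (exp (2*b*(\<bar>y\<bar> - b))) \<le> ennreal ?c * ennreal (exp (b * (y - b)))"
          by (simp add: ennreal_mult[symmetric])
        moreover have "y \<in> {..b}" "y \<in> {y. \<bar>y\<bar> \<le> b}" using True \<open>\<bar>y\<bar> \<le> b\<close> by auto
        ultimately show ?thesis by (simp add: add_increasing2)
      next
        case False
        have eq: "b * (\<bar>y\<bar> - b) = - b * (y - (-b))" using False by (simp add: algebra_simps)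
        have "std_normal_density y * exp (2*b*(\<bar>y\<bar> - b)) \<le> ?c * exp (- b * (y - (-b)))"
          using pl unfolding eq .
        then have "ennreal (std_normal_density y) * ennreal (exp (2*b*(\<bar>y\<bar> - b))) \<le> ennreal ?c * ennreal (exp (- b * (y - (-b))))"
          by (simp add: ennreal_mult[symmetric])
        moreover have "y \<in> {-b..}" "y \<in> {y. \<bar>y\<bar> \<le> b}" using False \<open>\<bar>y\<bar> \<le> b\<close> by auto
        ultimately show ?thesis by (simp add: add_increasing)
      qed
    qed simp
  qed
  also have "\<dots> = ennreal ?c * (\<integral>\<^sup>+y. ennreal (exp (b * (y - b))) * indicator {..b} y \<partial>lborel)
      + ennreal ?c * (\<integral>\<^sup>+y. ennreal (exp (- b * (y - (-b)))) * indicator {-b..} y \<partial>lborel)"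
    by (simp add: nn_integral_add nn_integral_cmult)
  also have "\<dots> = ennreal ?c * ennreal (1 / b) + ennreal ?c * ennreal (1 / b)"
    by (simp only: exp_right_int[OF b] exp_left_int[OF b])
  also have "\<dots> = ennreal (2 * ?c / b)"
    using b by (simp add: ennreal_mult[symmetric] ennreal_plus[symmetric] del: ennreal_plus)
  finally show ?thesis .
qed

lemma G3:
  fixes t :: real assumes t: "t \<ge> 1"
  shows "ennreal (exp (-2) * std_normal_density t / t) \<le> emeasure NN {y. t < \<bar>y\<bar>}"
proof -
  let ?c = "exp (-2) * std_normal_density t"
  have "ennreal (?c / t) = ennreal ?c * emeasure lborel {t<..t + 1/t}"
    using t by (simp add: ennreal_mult[symmetric])
  also have "\<dots> = (\<integral>\<^sup>+y. ennreal ?c * indicator {t<..t + 1/t} y \<partial>lborel)"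
    by (simp add: nn_integral_cmult_indicator)
  also have "\<dots> \<le> (\<integral>\<^sup>+y. ennreal (std_normal_density y) * indicator {y. t < \<bar>y\<bar>} y \<partial>lborel)"
  proof (intro nn_integral_mono)
    fix y :: real
    show "ennreal ?c * indicator {t<..t + 1/t} y \<le> ennreal (std_normal_density y) * indicator {y. t < \<bar>y\<bar>} y"
    proof (cases "y \<in> {t<..t + 1/t}")
      case True
      then have y1: "t < y" "y \<le> t + 1/t" by auto
      have "1/t \<le> 1" using t by simp
      have "y * y \<le> (t + 1/t) * (t + 1/t)" using y1 t by (intro mult_mono) auto
      also have "\<dots> = t*t + 2 + (1/t)*(1/t)" using t by (simp add: field_simps)
      also have "\<dots> \<le> t*t + 4"
      proof -
        have "(1/t)*(1/t) \<le> 1" using \<open>1/t \<le> 1\<close> t by (intro mult_le_one) auto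
        then show ?thesis by linarith
      qed
      finally have "-2 - t\<^sup>2/2 \<le> - y\<^sup>2/2" by (simp add: power2_eq_square)
      then have "exp (-2) * exp (- t\<^sup>2/2) \<le> exp (- y\<^sup>2/2)" by (simp add: exp_add[symmetric])
      then have "?c \<le> std_normal_density y" unfolding std_normal_density_def
        by (simp add: divide_right_mono mult.commute mult.left_commute)
      moreover have "t < \<bar>y\<bar>" using y1 by simp
      ultimately show ?thesis using True by simp
    qed simp
  qed
  also have "\<dots> = emeasure NN {y. t < \<bar>y\<bar>}"
    by (subst emeasure_density) auto
  finally show ?thesis using t by simp
qed

lemma NN_prob: "prob_space NN" by (rule prob_space_normal_density) simp

lemma space_NN[simp]: "space NN = UNIV" by simp
lemma sets_NN[simp]: "sets NN = sets borel" by simp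

lemma P_prob: "prob_space (std_gaussian n)"
  unfolding std_gaussian_def by (rule prob_space_PiM) (rule NN_prob)

lemma P_sum:
  fixes h :: "real \<Rightarrow> ennreal" assumes h[measurable]: "h \<in> borel_measurable borel"
  shows "(\<integral>\<^sup>+x. (\<Sum>i<n. h (x i)) \<partial>std_gaussian n) = of_nat n * (\<integral>\<^sup>+y. h y \<partial>NN)"
proof -
  interpret product_prob_space "\<lambda>_. NN" "{..<n}"
    by (intro product_prob_spaceI) (rule NN_prob)
  have "(\<integral>\<^sup>+x. (\<Sum>i<n. h (x i)) \<partial>std_gaussian n) = (\<Sum>i<n. \<integral>\<^sup>+x. h (x i) \<partial>std_gaussian n)"
    unfolding std_gaussian_def by (rule nn_integral_sum) auto
  also have "\<dots> = (\<Sum>i<n. \<integral>\<^sup>+y. h y \<partial>NN)"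
  proof (rule sum.cong[OF refl])
    fix i assume i: "i \<in> {..<n}"
    have "(\<integral>\<^sup>+y. h y \<partial>NN) = (\<integral>\<^sup>+y. h y \<partial>distr (PiM {..<n} (\<lambda>_. NN)) NN (\<lambda>\<omega>. \<omega> i))"
      using PiM_component[OF i] by simp
    also have "\<dots> = (\<integral>\<^sup>+x. h (x i) \<partial>PiM {..<n} (\<lambda>_. NN))"
      using i by (subst nn_integral_distr) auto
    finally show "(\<integral>\<^sup>+x. h (x i) \<partial>std_gaussian n) = (\<integral>\<^sup>+y. h y \<partial>NN)"
      unfolding std_gaussian_def by simp
  qed
  also have "\<dots> = of_nat n * (\<integral>\<^sup>+y. h y \<partial>NN)" by simp
  finally show ?thesis .
qed

lemma P_all:
  fixes A :: "real set" assumes A: "A \<in> sets borel"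
  shows "emeasure (std_gaussian n) {x\<in>space (std_gaussian n). \<forall>i<n. x i \<in> A} = emeasure NN A ^ n"
proof -
  interpret product_prob_space "\<lambda>_. NN" "{..<n}"
    by (intro product_prob_spaceI) (rule NN_prob)
  have "emeasure (PiM {..<n} (\<lambda>_. NN)) {x\<in>space (PiM {..<n} (\<lambda>_. NN)). \<forall>i\<in>{..<n}. x i \<in> A}
     = (\<Prod>i\<in>{..<n}. emeasure NN A)"
    using A by (intro emeasure_PiM_Collect) auto
  moreover have "{x\<in>space (PiM {..<n} (\<lambda>_. NN)). \<forall>i<n. x i \<in> A} = {x\<in>space (PiM {..<n} (\<lambda>_. NN)). \<forall>i\<in>{..<n}. x i \<in> A}"
    by auto
  ultimately show ?thesis unfolding std_gaussian_def by simp
qed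

lemma lp_meas[measurable]: "lp_norm n p \<in> borel_measurable (std_gaussian n)"
  unfolding lp_norm_def[abs_def] std_gaussian_def by measurable

definition wr :: "real \<Rightarrow> real \<Rightarrow> real" where
  "wr b y = (if b < \<bar>y\<bar> then 1 else exp (2*b*(\<bar>y\<bar> - b)))"

lemma wr_nonneg: "0 \<le> wr b y" by (simp add: wr_def)

lemma pow_le_exp:
  fixes y b p :: real
  assumes y: "0 \<le> y" "y \<le> b" and b: "0 < b" and p: "2*b*b \<le> p"
  shows "y powr p \<le> b powr p * exp (2*b*(y-b))"
proof (cases "y = 0")
  case True then show ?thesis using b by simp
next
  case False
  then have y0: "0 < y" using y by simp
  have p0: "0 < p" using p b by (smt (verit) mult_pos_pos)
  have "ln y - ln b = ln (y / b)" using y0 b by (simp add: ln_div)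
  also have "\<dots> \<le> y / b - 1" using y0 b by (intro ln_le_minus_one) simp
  also have "\<dots> = (y - b) / b" using b by (simp add: field_simps)
  finally have l1: "ln y - ln b \<le> (y - b) / b" .
  have "p * (ln y - ln b) \<le> p * ((y - b) / b)" by (rule mult_left_mono[OF l1]) (use p0 in simp)
  also have "\<dots> \<le> 2*b*(y-b)"
  proof -
    have "(y - b) * (p / b - 2*b) \<le> 0"
    proof (rule mult_nonpos_nonneg)
      show "y - b \<le> 0" using y by simp
      have "2*b \<le> p / b" using p b by (simp add: field_simps)
      then show "0 \<le> p / b - 2*b" by simp
    qed
    then show ?thesis using b by (simp add: field_simps)
  qed
  finally have "p * ln y \<le> p * ln b + 2*b*(y-b)" by (simp add: algebra_simps)
  then have "exp (p * ln y) \<le> exp (p * ln b + 2*b*(y-b))" by simp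
  then show ?thesis using y0 b by (simp add: powr_def exp_add mult.commute)
qed

lemma lp_nonneg: "0 \<le> lp_norm n p x"
  unfolding lp_norm_def by simp

lemma coord_le_lp:
  assumes p: "0 < p" and i: "i < n"
  shows "\<bar>x i\<bar> \<le> lp_norm n p x"
proof -
  have "\<bar>x i\<bar> powr p \<le> (\<Sum>j<n. \<bar>x j\<bar> powr p)"
    using i by (intro member_le_sum) auto
  then have "(\<bar>x i\<bar> powr p) powr (1/p) \<le> (\<Sum>j<n. \<bar>x j\<bar> powr p) powr (1/p)"
    using p by (intro powr_mono2) auto
  then show ?thesis using p unfolding lp_norm_def by (simp add: powr_powr)
qed

lemma PW1:
  assumes b: "0 < b" and p: "2*b*b \<le> p" and f: "b < lp_norm n p x"
  shows "1 \<le> (\<Sum>i<n. wr b (x i))"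
proof (cases "\<exists>i<n. b < \<bar>x i\<bar>")
  case True
  then obtain i where i: "i < n" "b < \<bar>x i\<bar>" by auto
  have "1 = wr b (x i)" using i by (simp add: wr_def)
  also have "\<dots> \<le> (\<Sum>i<n. wr b (x i))" using i by (intro member_le_sum) (auto simp: wr_nonneg)
  finally show ?thesis .
next
  case False
  have p0: "0 < p" using p b by (smt (verit) mult_pos_pos)
  let ?S = "\<Sum>j<n. \<bar>x j\<bar> powr p"
  have S0: "0 \<le> ?S" by (simp add: sum_nonneg)
  have "b powr p < (?S powr (1/p)) powr p"
    using f b p0 unfolding lp_norm_def by (intro powr_less_mono2) auto
  also have "\<dots> = ?S" using S0 p0 by (simp add: powr_powr)
  finally have bS: "b powr p < ?S" .
  have "?S \<le> (\<Sum>j<n. b powr p * wr b (x j))"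
  proof (rule sum_mono)
    fix j assume "j \<in> {..<n}"
    then have "\<bar>x j\<bar> \<le> b" using False by auto
    then show "\<bar>x j\<bar> powr p \<le> b powr p * wr b (x j)"
      using pow_le_exp[of "\<bar>x j\<bar>" b p] b p by (simp add: wr_def)
  qed
  also have "\<dots> = b powr p * (\<Sum>j<n. wr b (x j))" by (simp add: sum_distrib_left)
  finally have "b powr p * 1 < b powr p * (\<Sum>j<n. wr b (x j))" using bS by simp
  then show ?thesis using b by (simp add: mult_less_cancel_left)
qed

lemma PW2:
  assumes b: "0 < b" and p: "0 < p" and n2: "real n powr (1/p) \<le> 2" and f: "b < lp_norm n p x"
  shows "\<exists>i<n. b/2 < \<bar>x i\<bar>"
proof (rule ccontr)
  assume "\<not> (\<exists>i<n. b/2 < \<bar>x i\<bar>)"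
  then have le: "\<And>i. i < n \<Longrightarrow> \<bar>x i\<bar> \<le> b/2" by auto
  let ?S = "\<Sum>j<n. \<bar>x j\<bar> powr p"
  have "?S \<le> (\<Sum>j<n. (b/2) powr p)"
    using le p by (intro sum_mono powr_mono2) auto
  also have "\<dots> = real n * (b/2) powr p" by simp
  finally have "?S powr (1/p) \<le> (real n * (b/2) powr p) powr (1/p)"
    using p by (intro powr_mono2) (auto simp: sum_nonneg)
  also have "\<dots> = real n powr (1/p) * (b/2)"
    using p b by (simp add: powr_mult powr_powr)
  also have "\<dots> \<le> 2 * (b/2)" using n2 b by (intro mult_right_mono) auto
  finally have "lp_norm n p x \<le> b" unfolding lp_norm_def by simp
  then show False using f by simp
qed

locale setting =
  fixes n :: nat and p a :: real
  assumes a1: "1 \<le> a" and aeq: "real n * std_normal_density a = a"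
    and lnn: "1 \<le> ln (real n)" and pc: "400 * ln (real n) < p"
    and a_up: "a\<^sup>2 \<le> 2 * ln (real n)"
begin

lemma n_pos: "0 < real n"
  using lnn by (cases "n = 0") auto

lemma p_pos: "0 < p" using pc lnn by simp

lemma n_powr: "real n powr (1/p) \<le> 2"
proof -
  have "ln (real n) / p \<le> 1/400" using pc p_pos lnn by (simp add: field_simps)
  also have "\<dots> \<le> ln 2" using ln2_ge_two_thirds by simp
  finally have "exp (ln (real n) / p) \<le> exp (ln 2)" unfolding exp_le_cancel_iff .
  then have "exp (ln (real n) / p) \<le> 2" by simp
  then show ?thesis using n_pos by (simp add: powr_def)
qed

lemma phi_shift: "std_normal_density b = std_normal_density a * exp (- (b\<^sup>2 - a\<^sup>2) / 2)"
  unfolding std_normal_density_def by (simp add: mult.assoc exp_add[symmetric] field_simps)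

lemma N1:
  assumes b: "a \<le> b"
  shows "real n * std_normal_density b / b \<le> exp (- a * (b - a))"
proof -
  have b0: "0 < b" using a1 b by simp
  have "real n * std_normal_density b / b = (real n * std_normal_density a) * exp (- (b\<^sup>2 - a\<^sup>2) / 2) / b"
    by (subst phi_shift[of b]) (simp add: mult.assoc)
  also have "\<dots> = a * exp (- (b\<^sup>2 - a\<^sup>2) / 2) / b" using aeq by simp
  also have "\<dots> \<le> exp (- (b\<^sup>2 - a\<^sup>2) / 2)"
  proof -
    have "a * exp (- (b\<^sup>2 - a\<^sup>2) / 2) \<le> b * exp (- (b\<^sup>2 - a\<^sup>2) / 2)"
      by (rule mult_right_mono) (use b in auto)
    then show ?thesis using b0 by (simp add: divide_le_eq mult.commute)
  qed
  also have "\<dots> \<le> exp (- a * (b - a))"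
  proof -
    have "a * (b - a) \<le> (b\<^sup>2 - a\<^sup>2) / 2"
    proof -
      have "0 \<le> (b - a) * (b - a)" by simp
      then show ?thesis by (simp add: power2_eq_square algebra_simps)
    qed
    then show ?thesis by simp
  qed
  finally show ?thesis .
qed

lemma N2:
  assumes b: "a \<le> b" and bp: "p < 2*b*b"
  shows "real n * (2 * std_normal_density (b/2) / (b/2)) \<le> 4 * exp (- a * (b - a))"
proof -
  have b0: "1 \<le> b" using a1 b by simp
  have lnb: "ln (real n) < b*b/200" using pc bp by linarith
  have "a*a < b*b/100" using a_up lnb unfolding power2_eq_square by linarith
  then have "(10*a)*(10*a) < b*b" by simp
  then have "(10*a)^2 < b^2" by (simp add: power2_eq_square)
  then have "10*a < b" by (rule power_less_imp_less_base) (use b0 in simp)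
  then have "10*a*b \<le> b*b" using b0 by (intro mult_right_mono) auto
  then have ab: "a*b \<le> b*b/10" by linarith
  have "std_normal_density (b/2) \<le> exp (- (b/2)\<^sup>2 / 2)"
    unfolding std_normal_density_def
  proof -
    have "1 \<le> sqrt (2*pi)" using pi_gt3 by (simp add: real_le_rsqrt)
    then show "1 / sqrt (2 * pi) * exp (- (b / 2)\<^sup>2 / 2) \<le> exp (- (b / 2)\<^sup>2 / 2)"
      by (simp add: divide_le_eq)
  qed
  then have "real n * (2 * std_normal_density (b/2) / (b/2)) \<le> real n * (4 * exp (- (b/2)\<^sup>2 / 2))"
  proof -
    have "2 * std_normal_density (b/2) / (b/2) = 4 * std_normal_density (b/2) / b" by simp
    also have "\<dots> \<le> 4 * std_normal_density (b/2)"
      using b0 mult_left_mono[OF b0, of "std_normal_density (b/2)"] by (simp add: divide_le_eq)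
    also have "\<dots> \<le> 4 * exp (- (b/2)\<^sup>2 / 2)" using \<open>std_normal_density (b/2) \<le> _\<close> by simp
    finally show ?thesis by (rule mult_left_mono) simp
  qed
  also have "\<dots> = 4 * exp (ln (real n) - b*b/8)"
  proof -
    have e1: "exp (ln (real n) - b*b/8) = real n / exp (b*b/8)"
      using n_pos by (simp add: exp_diff)
    have e3: "- (b/2)\<^sup>2 / 2 = - (b*b/8)" by (simp add: power2_eq_square)
    have e4: "real n * (4 * exp (- (b*b/8))) = 4 * (real n / exp (b*b/8))"
      by (simp add: exp_minus inverse_eq_divide)
    show ?thesis by (simp only: e1 e3 e4)
  qed
  also have "\<dots> \<le> 4 * exp (- a * (b - a))"
  proof -
    have e2: "- a * (b - a) = a*a - a*b" by (simp add: algebra_simps)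
    have "0 \<le> a*a" "0 \<le> b*b" by simp_all
    then have "ln (real n) - b*b/8 \<le> - a * (b - a)" unfolding e2 using lnb ab by linarith
    then show ?thesis by simp
  qed
  finally show ?thesis .
qed

end

context setting begin

abbreviation "PP \<equiv> std_gaussian n"
abbreviation "ff \<equiv> lp_norm n p"

lemma markov_sum:
  fixes g :: "real \<Rightarrow> real"
  assumes g[measurable]: "g \<in> borel_measurable borel" and g0: "\<And>y. 0 \<le> g y"
    and S[measurable]: "S \<in> sets PP"
    and B: "\<And>x. x \<in> S \<Longrightarrow> 1 \<le> (\<Sum>i<n. g (x i))"
  shows "emeasure PP S \<le> ennreal (real n) * (\<integral>\<^sup>+y. ennreal (g y) \<partial>NN)"
proof -
  have "emeasure PP S = (\<integral>\<^sup>+x. indicator S x \<partial>PP)" using S by simp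
  also have "\<dots> \<le> (\<integral>\<^sup>+x. (\<Sum>i<n. ennreal (g (x i))) \<partial>PP)"
  proof (rule nn_integral_mono)
    fix x assume "x \<in> space PP"
    show "indicator S x \<le> (\<Sum>i<n. ennreal (g (x i)))"
    proof (cases "x \<in> S")
      case True
      have "ennreal 1 \<le> ennreal (\<Sum>i<n. g (x i))" using B[OF True] by (rule ennreal_leI)
      then show ?thesis using True g0 by (simp add: sum_ennreal)
    qed simp
  qed
  also have "\<dots> = of_nat n * (\<integral>\<^sup>+y. ennreal (g y) \<partial>NN)"
    by (rule P_sum) simp
  finally show ?thesis by (simp add: ennreal_of_nat_eq_real_of_nat)
qed

lemma UT:
  assumes b: "a \<le> b"
  shows "emeasure PP {x\<in>space PP. b < ff x} \<le> ennreal (4 * exp (- a * (b - a)))"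
proof -
  have b0: "0 < b" using a1 b by simp
  have S: "{x\<in>space PP. b < ff x} \<in> sets PP" by measurable
  show ?thesis
  proof (cases "2*b*b \<le> p")
    case True
    have "emeasure PP {x\<in>space PP. b < ff x} \<le> ennreal (real n) * (\<integral>\<^sup>+y. ennreal (wr b y) \<partial>NN)"
    proof (rule markov_sum[OF _ wr_nonneg S])
      show "wr b \<in> borel_measurable borel" unfolding wr_def[abs_def] by measurable
      fix x assume "x \<in> {x\<in>space PP. b < ff x}"
      then show "1 \<le> (\<Sum>i<n. wr b (x i))" using PW1[OF b0 True] by auto
    qed
    also have "(\<integral>\<^sup>+y. ennreal (wr b y) \<partial>NN) = (\<integral>\<^sup>+y. indicator {y. b < \<bar>y\<bar>} y
        + ennreal (exp (2*b*(\<bar>y\<bar> - b))) * indicator {y. \<bar>y\<bar> \<le> b} y \<partial>NN)"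
      by (intro nn_integral_cong) (auto simp: wr_def indicator_def)
    also have "\<dots> = emeasure NN {y. b < \<bar>y\<bar>}
        + (\<integral>\<^sup>+y. ennreal (exp (2*b*(\<bar>y\<bar> - b))) * indicator {y. \<bar>y\<bar> \<le> b} y \<partial>NN)"
      by (subst nn_integral_add) auto
    also have "\<dots> \<le> ennreal (2 * std_normal_density b / b) + ennreal (2 * std_normal_density b / b)"
      by (intro add_mono G1 G2 b0)
    also have "ennreal (real n) * (ennreal (2 * std_normal_density b / b) + ennreal (2 * std_normal_density b / b))
        = ennreal (4 * (real n * std_normal_density b / b))"
      using b0 by (simp add: ennreal_mult[symmetric] ennreal_plus[symmetric] del: ennreal_plus)
    also have "\<dots> \<le> ennreal (4 * exp (- a * (b - a)))"
      using N1[OF b] by simp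
    finally show ?thesis by (simp add: mult_left_mono)
  next
    case False
    let ?g = "\<lambda>y::real. indicator {y. b/2 < \<bar>y\<bar>} y :: real"
    have "emeasure PP {x\<in>space PP. b < ff x} \<le> ennreal (real n) * (\<integral>\<^sup>+y. ennreal (?g y) \<partial>NN)"
    proof (rule markov_sum[OF _ _ S])
      show "?g \<in> borel_measurable borel" by measurable
      show "\<And>y. 0 \<le> ?g y" by simp
      fix x assume "x \<in> {x\<in>space PP. b < ff x}"
      then obtain i where i: "i < n" "b/2 < \<bar>x i\<bar>"
        using PW2[OF b0 p_pos n_powr] by auto
      have "1 = ?g (x i)" using i by simp
      also have "\<dots> \<le> (\<Sum>i<n. ?g (x i))" using i by (intro member_le_sum) auto
      finally show "1 \<le> (\<Sum>i<n. ?g (x i))" .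
    qed
    also have "(\<integral>\<^sup>+y. ennreal (?g y) \<partial>NN) = emeasure NN {y. b/2 < \<bar>y\<bar>}"
      by (simp add: ennreal_indicator)
    also have "ennreal (real n) * emeasure NN {y. b/2 < \<bar>y\<bar>} \<le> ennreal (real n) * ennreal (2 * std_normal_density (b/2) / (b/2))"
      using b0 by (intro mult_left_mono G1) auto
    also have "\<dots> = ennreal (real n * (2 * std_normal_density (b/2) / (b/2)))"
      using b0 by (subst ennreal_mult[symmetric]) auto
    also have "\<dots> \<le> ennreal (4 * exp (- a * (b - a)))"
      using N2[OF b] False by simp
    finally show ?thesis .
  qed
qed

end

lemma P_all_sets:
  assumes A: "A \<in> sets borel"
  shows "{x\<in>space (std_gaussian n). \<forall>i<n. x i \<in> A} \<in> sets (std_gaussian n)"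
proof -
  have "{x\<in>space (PiM {..<n} (\<lambda>_. NN)). \<forall>i\<in>{..<n}. x i \<in> A} \<in> sets (PiM {..<n} (\<lambda>_. NN))"
  proof (rule sets.sets_Collect_finite_All)
    fix i assume i: "i \<in> {..<n}"
    have "{y\<in>space NN. y \<in> A} \<in> sets NN" using A by simp
    then show "{x\<in>space (PiM {..<n} (\<lambda>_. NN)). x i \<in> A} \<in> sets (PiM {..<n} (\<lambda>_. NN))"
      by (rule sets_Collect_single'[OF i])
  qed simp
  then show ?thesis unfolding std_gaussian_def Ball_def lessThan_iff .
qed

lemma sqrt2pi_ge1: "1 \<le> sqrt (2*pi)"
  by (rule real_le_rsqrt) (use pi_gt3 in simp)

context setting begin

lemma phi1_le: "std_normal_density 1 \<le> 1"
proof -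
  have "1 \<le> sqrt (2*pi)" by (rule sqrt2pi_ge1)
  moreover have "exp (- 1 / 2) \<le> (1::real)" by simp
  ultimately have "exp (- 1 / 2) \<le> sqrt (2*pi)" by linarith
  then show ?thesis unfolding std_normal_density_def by (simp add: divide_le_eq)
qed

lemma phi1_pos: "0 < std_normal_density 1" by (simp add: normal_density_pos)

lemma N3:
  assumes s: "0 \<le> s" and u: "1 \<le> a - s"
  shows "exp (a * s/2) \<le> real n * std_normal_density (a - s) / (a - s)"
proof -
  let ?u = "a - s"
  have "real n * std_normal_density ?u / ?u = (real n * std_normal_density a) * exp (- (?u\<^sup>2 - a\<^sup>2) / 2) / ?u"
    by (subst phi_shift[of ?u]) (simp add: mult.assoc)
  also have "\<dots> = (a / ?u) * exp (- (?u\<^sup>2 - a\<^sup>2) / 2)" using aeq by simp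
  finally have eq: "real n * std_normal_density ?u / ?u = (a / ?u) * exp (- (?u\<^sup>2 - a\<^sup>2) / 2)" .
  have "a * s/2 \<le> - (?u\<^sup>2 - a\<^sup>2) / 2"
  proof -
    have "- (?u\<^sup>2 - a\<^sup>2) / 2 = a * s - s * s/2" by (simp add: power2_eq_square field_simps)
    moreover have "s * s \<le> a * s" using u s by (intro mult_right_mono) auto
    ultimately show ?thesis by linarith
  qed
  then have "exp (a * s/2) \<le> exp (- (?u\<^sup>2 - a\<^sup>2) / 2)" by simp
  also have "\<dots> \<le> (a / ?u) * exp (- (?u\<^sup>2 - a\<^sup>2) / 2)"
  proof -
    have "1 \<le> a / ?u" using u s by simp
    then show ?thesis using mult_right_mono[OF \<open>1 \<le> a / ?u\<close>, of "exp (- (?u\<^sup>2 - a\<^sup>2) / 2)"] by simp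
  qed
  finally show ?thesis unfolding eq .
qed

lemma exp_a2: "exp (- a\<^sup>2 / 2) = sqrt (2*pi) * a / real n"
proof -
  have "real n * (exp (- a\<^sup>2 / 2) / sqrt (2*pi)) = a"
    using aeq unfolding std_normal_density_def by simp
  then show ?thesis using n_pos by (simp add: field_simps)
qed

lemma N4:
  assumes s: "0 \<le> s" "s \<le> a"
  shows "1 / real n \<le> exp (- (a * s/2))"
proof -
  have "1 \<le> sqrt (2*pi)" by (rule sqrt2pi_ge1)
  then have "1 \<le> sqrt (2*pi) * a" using a1 mult_mono[of 1 "sqrt(2*pi)" 1 a] by simp
  then have "1 / real n \<le> exp (- a\<^sup>2 / 2)" unfolding exp_a2 using n_pos
    by (simp add: divide_right_mono)
  also have "\<dots> \<le> exp (- (a * s/2))"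
  proof -
    have "a * s \<le> a*a" using s a1 by (intro mult_left_mono) auto
    then show ?thesis by (simp add: power2_eq_square)
  qed
  finally show ?thesis .
qed

definition "CL = exp 2 / std_normal_density 1"

lemma LT:
  assumes s: "0 \<le> s" "s < a"
  shows "measure PP {x\<in>space PP. ff x < a - s} \<le> CL * exp (- (a * s/2))"
proof -
  interpret PP: prob_space PP by (rule P_prob)
  interpret NN: prob_space NN by (rule NN_prob)
  define u where "u = max 1 (a - s)"
  have u1: "1 \<le> u" unfolding u_def by simp
  define q where "q = measure NN {y. u < \<bar>y\<bar>}"
  have Sm: "{x\<in>space PP. \<forall>i<n. x i \<in> {y. \<bar>y\<bar> \<le> u}} \<in> sets PP"
    by (rule P_all_sets) measurable
  have "measure PP {x\<in>space PP. ff x < a - s} \<le> measure PP {x\<in>space PP. \<forall>i<n. x i \<in> {y. \<bar>y\<bar> \<le> u}}"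
  proof (rule PP.finite_measure_mono[OF _ Sm])
    show "{x\<in>space PP. ff x < a - s} \<subseteq> {x\<in>space PP. \<forall>i<n. x i \<in> {y. \<bar>y\<bar> \<le> u}}"
    proof safe
      fix x i assume "x \<in> space PP" "ff x < a - s" "i < n"
      then have "\<bar>x i\<bar> \<le> ff x" using coord_le_lp[OF p_pos] by auto
      then show "\<bar>x i\<bar> \<le> u" using \<open>ff x < a - s\<close> unfolding u_def by linarith
    qed
  qed
  also have "measure PP {x\<in>space PP. \<forall>i<n. x i \<in> {y. \<bar>y\<bar> \<le> u}} = (1 - q) ^ n"
  proof -
    have "emeasure PP {x\<in>space PP. \<forall>i<n. x i \<in> {y. \<bar>y\<bar> \<le> u}} = emeasure NN {y. \<bar>y\<bar> \<le> u} ^ n"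
      by (rule P_all) measurable
    also have "emeasure NN {y. \<bar>y\<bar> \<le> u} = ennreal (1 - q)"
    proof -
      have "{y. \<bar>y\<bar> \<le> u} = space NN - {y. u < \<bar>y\<bar>}" by auto
      moreover have ev: "{y::real. u < \<bar>y\<bar>} \<in> sets borel" by measurable
      ultimately have "measure NN {y. \<bar>y\<bar> \<le> u} = 1 - q" unfolding q_def
        using NN.prob_compl[of "{y. u < \<bar>y\<bar>}"] by simp
      then show ?thesis by (simp add: NN.emeasure_eq_measure)
    qed
    finally have "emeasure PP {x\<in>space PP. \<forall>i<n. x i \<in> {y. \<bar>y\<bar> \<le> u}} = ennreal ((1 - q) ^ n)"
      by (simp add: ennreal_power[symmetric] q_def NN.prob_le_1)
    then show ?thesis by (simp add: PP.emeasure_eq_measure q_def NN.prob_le_1)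
  qed
  also have "(1 - q) ^ n \<le> exp (- q) ^ n"
  proof (rule power_mono)
    show "1 - q \<le> exp (- q)" using exp_ge_add_one_self[of "-q"] by simp
    show "0 \<le> 1 - q" unfolding q_def by (simp add: NN.prob_le_1)
  qed
  also have "\<dots> = exp (- (real n * q))" by (simp add: exp_of_nat_mult[symmetric] mult.commute)
  also have "\<dots> \<le> exp 2 * (u / (real n * std_normal_density u))"
  proof -
    have G: "exp (-2) * std_normal_density u / u \<le> q"
    proof -
      have "ennreal (exp (-2) * std_normal_density u / u) \<le> ennreal q"
        using G3[OF u1] unfolding q_def by (simp add: NN.emeasure_eq_measure)
      then show ?thesis unfolding q_def by (rule ennreal_le_iff[THEN iffD1, OF measure_nonneg])
    qed
    have z0: "0 < real n * (exp (-2) * std_normal_density u / u)"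
      using n_pos u1 by (simp add: normal_density_pos)
    have "real n * (exp (-2) * std_normal_density u / u) \<le> real n * q"
      using G n_pos by (intro mult_left_mono) auto
    then have "exp (- (real n * q)) \<le> exp (- (real n * (exp (-2) * std_normal_density u / u)))" by simp
    also have "\<dots> \<le> 1 / (real n * (exp (-2) * std_normal_density u / u))"
    proof -
      let ?z = "real n * (exp (-2) * std_normal_density u / u)"
      have "?z \<le> exp ?z" using exp_ge_add_one_self[of ?z] by linarith
      have "exp (- ?z) = 1 / exp ?z" by (simp add: exp_minus inverse_eq_divide)
      also have "\<dots> \<le> 1 / ?z"
      proof -
        have pos: "0 < exp ?z * ?z" by (rule mult_pos_pos[OF _ z0]) simp
        show ?thesis by (rule divide_left_mono[OF \<open>?z \<le> exp ?z\<close> _ pos]) simp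
      qed
      finally show ?thesis .
    qed
    also have "\<dots> = exp 2 * (u / (real n * std_normal_density u))"
      using n_pos u1 by (simp add: exp_minus field_simps normal_density_pos)
    finally show ?thesis .
  qed
  also have "\<dots> \<le> CL * exp (- (a * s/2))"
  proof (cases "1 \<le> a - s")
    case True
    then have uu: "u = a - s" unfolding u_def by simp
    have "exp (a * s/2) \<le> real n * std_normal_density u / u" using N3[OF s(1) True] uu by simp
    then have "1 / (real n * std_normal_density u / u) \<le> 1 / exp (a * s/2)"
      by (rule divide_left_mono) (use n_pos u1 in \<open>auto simp: normal_density_pos\<close>)
    then have "u / (real n * std_normal_density u) \<le> exp (- (a * s/2))"
      by (simp add: exp_minus inverse_eq_divide)
    then have "exp 2 * (u / (real n * std_normal_density u)) \<le> exp 2 * exp (- (a * s/2))" by (rule mult_left_mono) simp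
    also have "\<dots> \<le> CL * exp (- (a * s/2))"
    proof (rule mult_right_mono)
      have "exp 2 * 1 \<le> exp 2 / std_normal_density 1 * std_normal_density 1"
        using phi1_pos by simp
      also have "\<dots> \<le> exp 2 / std_normal_density 1 * 1"
        using phi1_pos phi1_le by (intro mult_left_mono) auto
      finally show "exp 2 \<le> CL" unfolding CL_def by simp
    qed simp
    finally show ?thesis .
  next
    case False
    then have uu: "u = 1" unfolding u_def by simp
    have "exp 2 * (u / (real n * std_normal_density u)) = CL * (1 / real n)"
      unfolding uu CL_def by simp
    also have "\<dots> \<le> CL * exp (- (a * s/2))"
    proof (rule mult_left_mono)
      show "1 / real n \<le> exp (- (a * s/2))" by (rule N4) (use s in auto)
      show "0 \<le> CL" unfolding CL_def by simp
    qed
    finally show ?thesis .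
  qed
  finally show ?thesis .
qed

end

lemma meas_le_of_emeas:
  assumes "emeasure M A \<le> ennreal c" "0 \<le> c"
  shows "measure M A \<le> c"
proof -
  have "measure M A = enn2real (emeasure M A)" by (simp add: measure_def)
  also have "\<dots> \<le> enn2real (ennreal c)" by (rule enn2real_mono[OF assms(1)]) simp
  finally show ?thesis using assms(2) by simp
qed

lemma sq_le_suminf:
  fixes Y d :: real assumes Y: "0 \<le> Y" and d: "0 < d"
  shows "ennreal (Y\<^sup>2) \<le> (\<Sum>k. ennreal (((real k + 1) * d)\<^sup>2) * (if real k * d < Y then 1 else 0))"
proof (cases "Y = 0")
  case True then show ?thesis by simp
next
  case False
  then have Yp: "0 < Y" using Y by simp
  define m where "m = \<lceil>Y / d\<rceil>"
  have m1: "1 \<le> m" unfolding m_def using Yp d by (simp add: one_le_ceiling)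
  define k where "k = nat m - 1"
  have km: "real k + 1 = of_int m" unfolding k_def using m1 by simp
  have "of_int m - 1 < Y / d" unfolding m_def by linarith
  then have "(of_int m - 1) * d < Y" using d by (simp add: less_divide_eq)
  moreover have "real k = of_int m - 1" using km by linarith
  ultimately have lt: "real k * d < Y" by simp
  have "Y / d \<le> of_int m" unfolding m_def by simp
  then have le: "Y \<le> (real k + 1) * d" using km d by (simp add: field_simps)
  have "Y\<^sup>2 \<le> ((real k + 1) * d)\<^sup>2" using le Y by (intro power_mono) auto
  then have "ennreal (Y\<^sup>2) \<le> ennreal (((real k + 1) * d)\<^sup>2) * (if real k * d < Y then 1 else 0)"
    using lt by simp
  also have "\<dots> = (\<Sum>j\<in>{k}. ennreal (((real j + 1) * d)\<^sup>2) * (if real j * d < Y then 1 else 0))" by simp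
  also have "\<dots> \<le> (\<Sum>j. ennreal (((real j + 1) * d)\<^sup>2) * (if real j * d < Y then 1 else 0))"
    by (rule sum_le_suminf) auto
  finally show ?thesis .
qed

lemma coef_bound: "(real k + 1)\<^sup>2 * exp (- 4 * real k) \<le> (1/2) ^ k"
proof -
  have "real k + 1 \<le> exp (real k)" by (metis add.commute exp_ge_add_one_self)
  then have "(real k + 1)\<^sup>2 \<le> (exp (real k))\<^sup>2" by (intro power_mono) auto
  also have "\<dots> = exp (2 * real k)" by (simp add: power2_eq_square exp_add[symmetric])
  finally have "(real k + 1)\<^sup>2 * exp (- 4 * real k) \<le> exp (2 * real k) * exp (- 4 * real k)"
    by (rule mult_right_mono) simp
  also have "\<dots> = exp (-2) ^ k" by (simp add: exp_add[symmetric] exp_of_nat_mult[symmetric])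
  also have "\<dots> \<le> (1/2) ^ k"
  proof (rule power_mono)
    have "3 \<le> exp (2::real)" using exp_ge_add_one_self[of 2] by simp
    then show "exp (-2) \<le> (1/2::real)" by (simp add: exp_minus inverse_eq_divide field_simps)
  qed simp
  finally show ?thesis .
qed

context setting begin

lemma CL_pos: "0 < CL" unfolding CL_def by (simp add: normal_density_pos)

lemma YT:
  "measure PP {x\<in>space PP. real k * (8/a) < \<bar>ff x - a\<bar>} \<le> (4 + CL) * exp (- 4 * real k)"
proof (cases "k = 0")
  case True
  have "measure PP {x\<in>space PP. real k * (8/a) < \<bar>ff x - a\<bar>} \<le> 1"
    by (rule prob_space.prob_le_1[OF P_prob])
  also have "1 \<le> (4 + CL) * exp (- 4 * real k)" using True CL_pos by simp
  finally show ?thesis .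
next
  case False
  define s where "s = real k * (8/a)"
  have s0: "0 < s" using False a1 unfolding s_def by simp
  have as: "a * s = 8 * real k" unfolding s_def using a1 by simp
  have A: "{x\<in>space PP. a + s < ff x} \<in> sets PP" by measurable
  have B: "{x\<in>space PP. ff x < a - s} \<in> sets PP" by measurable
  have "measure PP {x\<in>space PP. s < \<bar>ff x - a\<bar>} \<le> measure PP ({x\<in>space PP. a + s < ff x} \<union> {x\<in>space PP. ff x < a - s})"
  proof (rule finite_measure.finite_measure_mono[OF prob_space.finite_measure[OF P_prob]])
    show "{x\<in>space PP. s < \<bar>ff x - a\<bar>} \<subseteq> {x\<in>space PP. a + s < ff x} \<union> {x\<in>space PP. ff x < a - s}"
      by (auto simp: abs_if split: if_splits)
    show "{x\<in>space PP. a + s < ff x} \<union> {x\<in>space PP. ff x < a - s} \<in> sets PP"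
      by (rule sets.Un[OF A B])
  qed
  also have "\<dots> \<le> measure PP {x\<in>space PP. a + s < ff x} + measure PP {x\<in>space PP. ff x < a - s}"
    by (rule measure_Un_le[OF A B])
  also have "\<dots> \<le> 4 * exp (- 4 * real k) + CL * exp (- 4 * real k)"
  proof (rule add_mono)
    have "measure PP {x\<in>space PP. a + s < ff x} \<le> 4 * exp (- a * ((a + s) - a))"
      by (rule meas_le_of_emeas[OF UT]) (use s0 in auto)
    also have "\<dots> = 4 * exp (- 8 * real k)" using as by simp
    also have "\<dots> \<le> 4 * exp (- 4 * real k)" by simp
    finally show "measure PP {x\<in>space PP. a + s < ff x} \<le> 4 * exp (- 4 * real k)" .
    show "measure PP {x\<in>space PP. ff x < a - s} \<le> CL * exp (- 4 * real k)"
    proof (cases "s < a")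
      case True
      have "measure PP {x\<in>space PP. ff x < a - s} \<le> CL * exp (- (a * s / 2))"
        by (rule LT) (use s0 True in auto)
      also have "\<dots> = CL * exp (- 4 * real k)" using as by simp
      finally show ?thesis .
    next
      case False
      have "\<And>x. \<not> (ff x < a - s)"
      proof -
        fix x have "0 \<le> ff x" by (rule lp_nonneg)
        then show "\<not> (ff x < a - s)" using False by linarith
      qed
      then have e: "{x\<in>space PP. ff x < a - s} = {}" by blast
      show ?thesis unfolding e using CL_pos by simp
    qed
  qed
  finally show ?thesis unfolding s_def by (simp add: algebra_simps)
qed

end

context setting begin

lemma EY:
  "(\<integral>\<^sup>+x. ennreal ((ff x - a)\<^sup>2) \<partial>PP) \<le> ennreal (2 * (8/a)\<^sup>2 * (4 + CL))"
proof -
  define d where "d = 8/a"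
  have d0: "0 < d" unfolding d_def using a1 by simp
  let ?S = "\<lambda>k::nat. {x\<in>space PP. real k * d < \<bar>ff x - a\<bar>}"
  have Sm: "?S k \<in> sets PP" for k by measurable
  have "(\<integral>\<^sup>+x. ennreal ((ff x - a)\<^sup>2) \<partial>PP)
     \<le> (\<integral>\<^sup>+x. (\<Sum>k. ennreal (((real k + 1) * d)\<^sup>2) * indicator (?S k) x) \<partial>PP)"
  proof (rule nn_integral_mono)
    fix x assume x: "x \<in> space PP"
    have "ennreal ((ff x - a)\<^sup>2) = ennreal (\<bar>ff x - a\<bar>\<^sup>2)" by simp
    also have "\<dots> \<le> (\<Sum>k. ennreal (((real k + 1) * d)\<^sup>2) * (if real k * d < \<bar>ff x - a\<bar> then 1 else 0))"
      by (rule sq_le_suminf[OF _ d0]) simp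
    also have "\<dots> = (\<Sum>k. ennreal (((real k + 1) * d)\<^sup>2) * indicator (?S k) x)"
      using x by (intro suminf_cong) (simp add: indicator_def)
    finally show "ennreal ((ff x - a)\<^sup>2) \<le> (\<Sum>k. ennreal (((real k + 1) * d)\<^sup>2) * indicator (?S k) x)" .
  qed
  also have "\<dots> = (\<Sum>k. \<integral>\<^sup>+x. ennreal (((real k + 1) * d)\<^sup>2) * indicator (?S k) x \<partial>PP)"
    by (rule nn_integral_suminf) (use Sm in simp)
  also have "\<dots> = (\<Sum>k. ennreal (((real k + 1) * d)\<^sup>2) * emeasure PP (?S k))"
    by (intro suminf_cong nn_integral_cmult_indicator Sm)
  also have "\<dots> \<le> (\<Sum>k. ennreal (d\<^sup>2 * (4 + CL) * (1/2) ^ k))"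
  proof (rule suminf_le)
    fix k :: nat
    have "emeasure PP (?S k) = ennreal (measure PP (?S k))"
      by (rule finite_measure.emeasure_eq_measure[OF prob_space.finite_measure[OF P_prob]])
    also have "measure PP (?S k) \<le> (4 + CL) * exp (- 4 * real k)"
      using YT[of k] unfolding d_def .
    then have "ennreal (measure PP (?S k)) \<le> ennreal ((4 + CL) * exp (- 4 * real k))"
      by (rule ennreal_leI)
    finally have "ennreal (((real k + 1) * d)\<^sup>2) * emeasure PP (?S k)
        \<le> ennreal (((real k + 1) * d)\<^sup>2) * ennreal ((4 + CL) * exp (- 4 * real k))"
      by (rule mult_left_mono) simp
    also have "\<dots> = ennreal (((real k + 1) * d)\<^sup>2 * ((4 + CL) * exp (- 4 * real k)))"
      using CL_pos by (subst ennreal_mult[symmetric]) auto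
    also have "\<dots> = ennreal (d\<^sup>2 * (4 + CL) * ((real k + 1)\<^sup>2 * exp (- 4 * real k)))"
      by (rule arg_cong[where f=ennreal]) (simp add: power_mult_distrib)
    also have "\<dots> \<le> ennreal (d\<^sup>2 * (4 + CL) * (1/2) ^ k)"
    proof (rule ennreal_leI, rule mult_left_mono)
      show "(real k + 1)\<^sup>2 * exp (- 4 * real k) \<le> (1/2) ^ k" by (rule coef_bound)
      show "0 \<le> d\<^sup>2 * (4 + CL)" using CL_pos by simp
    qed
    finally show "ennreal (((real k + 1) * d)\<^sup>2) * emeasure PP (?S k) \<le> ennreal (d\<^sup>2 * (4 + CL) * (1/2) ^ k)" .
  qed simp_all
  also have "\<dots> = ennreal (d\<^sup>2 * (4 + CL) * 2)"
  proof (rule suminf_ennreal_eq)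
    show "\<And>k. 0 \<le> d\<^sup>2 * (4 + CL) * (1/2) ^ k" using CL_pos by simp
    have "(\<lambda>k. (1/2::real) ^ k) sums (1 / (1 - 1/2))" by (rule geometric_sums) simp
    then have "(\<lambda>k. (1/2::real) ^ k) sums 2" by simp
    then show "(\<lambda>k. d\<^sup>2 * (4 + CL) * (1/2) ^ k) sums (d\<^sup>2 * (4 + CL) * 2)"
      by (rule sums_mult)
  qed
  finally show ?thesis unfolding d_def by (simp add: algebra_simps)
qed

lemma VAR: "var PP ff \<le> 2 * (8/a)\<^sup>2 * (4 + CL)"
proof -
  interpret PP: prob_space PP by (rule P_prob)
  let ?B = "2 * (8/a)\<^sup>2 * (4 + CL)"
  have B0: "0 \<le> ?B" using CL_pos by simp
  let ?g = "\<lambda>x. (ff x - a)\<^sup>2"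
  have gm: "?g \<in> borel_measurable PP" by measurable
  have nnle: "(\<integral>\<^sup>+x. ennreal (?g x) \<partial>PP) \<le> ennreal ?B" by (rule EY)
  have ig: "integrable PP ?g"
  proof (rule integrableI_nonneg[OF gm])
    show "AE x in PP. 0 \<le> ?g x" by simp
    show "(\<integral>\<^sup>+x. ennreal (?g x) \<partial>PP) < \<infinity>" using nnle by (simp add: order_le_less_trans)
  qed
  have Eg: "(\<integral>x. ?g x \<partial>PP) \<le> ?B"
  proof -
    have "(\<integral>x. ?g x \<partial>PP) = enn2real (\<integral>\<^sup>+x. ennreal (?g x) \<partial>PP)"
      by (rule integral_eq_nn_integral[OF gm]) simp
    also have "\<dots> \<le> enn2real (ennreal ?B)" by (rule enn2real_mono[OF nnle]) simp
    finally show ?thesis using B0 by simp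
  qed
  have ifsq: "integrable PP (\<lambda>x. (ff x)\<^sup>2)"
  proof (rule Bochner_Integration.integrable_bound)
    show "integrable PP (\<lambda>x. 2 * ?g x + 2 * a\<^sup>2)" using ig by simp
    show "(\<lambda>x. (ff x)\<^sup>2) \<in> borel_measurable PP" by measurable
    show "AE x in PP. norm ((ff x)\<^sup>2) \<le> norm (2 * ?g x + 2 * a\<^sup>2)"
    proof (rule AE_I2)
      fix x
      have "0 \<le> (ff x - 2 * a)\<^sup>2" by simp
      then have "(ff x)\<^sup>2 \<le> 2 * ?g x + 2 * a\<^sup>2" by (simp add: power2_eq_square algebra_simps)
      then show "norm ((ff x)\<^sup>2) \<le> norm (2 * ?g x + 2 * a\<^sup>2)" by simp
    qed
  qed
  have iff: "integrable PP ff"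
  proof (rule Bochner_Integration.integrable_bound)
    show "integrable PP (\<lambda>x. (ff x)\<^sup>2 + 1)" using ifsq by simp
    show "ff \<in> borel_measurable PP" by measurable
    show "AE x in PP. norm (ff x) \<le> norm ((ff x)\<^sup>2 + 1)"
    proof (rule AE_I2)
      fix x
      have "0 \<le> (ff x - 1) * (ff x - 1)" by simp
      then have "2 * ff x \<le> ff x * ff x + 1" by (simp add: algebra_simps)
      then have "ff x \<le> (ff x)\<^sup>2 + 1" using lp_nonneg[of n p x] unfolding power2_eq_square by linarith
      then show "norm (ff x) \<le> norm ((ff x)\<^sup>2 + 1)" using lp_nonneg[of n p x] by simp
    qed
  qed
  define m where "m = (\<integral>x. ff x \<partial>PP)"
  have "var PP ff = PP.variance ff" unfolding var_def by simp
  also have "\<dots> = (\<integral>x. (ff x)\<^sup>2 \<partial>PP) - m\<^sup>2"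
    unfolding m_def by (rule PP.variance_eq[OF iff ifsq])
  also have "\<dots> = (\<integral>x. ?g x \<partial>PP) - (m - a)\<^sup>2"
  proof -
    have "(\<integral>x. ?g x \<partial>PP) = (\<integral>x. (ff x)\<^sup>2 - 2 * a * ff x + a\<^sup>2 \<partial>PP)"
      by (intro Bochner_Integration.integral_cong) (simp_all add: power2_eq_square algebra_simps)
    also have "\<dots> = (\<integral>x. (ff x)\<^sup>2 \<partial>PP) - 2 * a * m + a\<^sup>2"
      using iff ifsq unfolding m_def by (simp add: PP.prob_space)
    finally show ?thesis by (simp add: power2_eq_square algebra_simps)
  qed
  also have "\<dots> \<le> (\<integral>x. ?g x \<partial>PP)" by simp
  also have "\<dots> \<le> ?B" by (rule Eg)
  finally show ?thesis .
qed

end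

lemma ln_ge1: assumes "1024 \<le> n" shows "1 \<le> ln (real n)"
proof -
  have "ln (4::real) = ln (2 * 2)" by simp
  also have "\<dots> = ln 2 + ln 2" by (rule ln_mult_pos) simp_all
  finally have "4/3 \<le> ln (4::real)" using ln2_ge_two_thirds by simp
  also have "ln 4 \<le> ln (real n)" using assms by simp
  finally show ?thesis by simp
qed

lemma n_big: assumes "1024 \<le> n" shows "4 * pi * ln (real n) \<le> real n"
proof -
  have n0: "0 < real n" using assms by simp
  have s31: "32 \<le> sqrt (real n)" using assms by (intro real_le_rsqrt) simp
  have "ln (real n) = 2 * ln (sqrt (real n))" using n0 by (simp add: ln_sqrt)
  also have "ln (sqrt (real n)) \<le> sqrt (real n) - 1" using n0 by (intro ln_le_minus_one) simp
  finally have "ln (real n) \<le> 2 * sqrt (real n)" by simp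
  then have "4 * pi * ln (real n) \<le> 4 * pi * (2 * sqrt (real n))" by simp
  also have "\<dots> \<le> 32 * sqrt (real n)" using pi_less_4 by (simp add: mult_right_mono)
  also have "\<dots> \<le> sqrt (real n) * sqrt (real n)" using s31 by (intro mult_right_mono) auto
  also have "\<dots> = real n" using n0 by simp
  finally show ?thesis .
qed

lemma sqrt2pi_le3: "sqrt (2*pi) \<le> 3"
  by (rule real_sqrt_le_iff[THEN iffD2, of _ 9, simplified]) (use pi_less_4 in simp)

lemma exists_a:
  assumes n: "1024 \<le> n"
  shows "\<exists>a. 1 \<le> a \<and> real n * std_normal_density a = a"
proof -
  let ?g = "\<lambda>x. real n * std_normal_density x / x"
  have "?g (real n) \<le> 1"
  proof -
    have "?g (real n) = std_normal_density (real n)" using n by simp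
    also have "\<dots> \<le> 1" unfolding std_normal_density_def using sqrt2pi_ge1
      by (simp add: divide_le_eq order_trans[OF _ sqrt2pi_ge1])
    finally show ?thesis .
  qed
  moreover have "1 \<le> ?g 1"
  proof -
    have "1/2 \<le> exp (- 1 / 2 :: real)" using exp_ge_add_one_self[of "- 1 / 2 :: real"] by simp
    then have "1/2 / 3 \<le> exp (- 1 / 2 :: real) / sqrt (2*pi)"
      using sqrt2pi_le3 sqrt2pi_ge1 by (intro frac_le) auto
    then have "1/6 \<le> std_normal_density 1" unfolding std_normal_density_def by simp
    then have h2: "real n * (1/6) \<le> real n * std_normal_density 1" by (intro mult_left_mono) auto
    have h: "1 \<le> real n * (1/6)" using n by simp
    have "1 \<le> real n * std_normal_density 1" by (rule order_trans[OF h h2])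
    then show ?thesis by simp
  qed
  moreover have "(1::real) \<le> real n" using n by simp
  moreover have "\<forall>x. 1 \<le> x \<and> x \<le> real n \<longrightarrow> isCont ?g x"
    unfolding std_normal_density_def by (auto intro!: continuous_intros)
  ultimately obtain a where a: "1 \<le> a" "a \<le> real n" "?g a = 1"
    using IVT2[of ?g "real n" 1 1] by blast
  then show ?thesis by (intro exI[of _ a]) (simp add: divide_eq_1_iff)
qed

lemma a_bounds:
  assumes n: "1024 \<le> n" and a1: "1 \<le> a" and aeq: "real n * std_normal_density a = a"
  shows "a\<^sup>2 \<le> 2 * ln (real n)" "ln (real n) \<le> a\<^sup>2"
proof -
  have n0: "0 < real n" using n by simp
  have e: "exp (- a\<^sup>2 / 2) = sqrt (2*pi) * a / real n"
  proof -
    have "real n * (exp (- a\<^sup>2 / 2) / sqrt (2*pi)) = a"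
      using aeq unfolding std_normal_density_def by simp
    then show ?thesis using n0 by (simp add: field_simps)
  qed
  have "1 / real n \<le> sqrt (2*pi) * a / real n"
    using sqrt2pi_ge1 a1 n0 mult_mono[of 1 "sqrt(2*pi)" 1 a] by (intro divide_right_mono) auto
  then have "exp (- ln (real n)) \<le> exp (- a\<^sup>2 / 2)" unfolding e using n0 by (simp add: exp_minus inverse_eq_divide)
  then show up: "a\<^sup>2 \<le> 2 * ln (real n)" by simp
  have "exp (- a\<^sup>2) = (exp (- a\<^sup>2 / 2))\<^sup>2" by (simp add: power2_eq_square exp_add[symmetric])
  also have "\<dots> = 2 * pi * a\<^sup>2 / (real n)\<^sup>2" unfolding e by (simp add: power_divide power_mult_distrib)
  also have "\<dots> \<le> 2 * pi * (2 * ln (real n)) / (real n)\<^sup>2"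
    using up by (intro divide_right_mono mult_left_mono) auto
  also have "\<dots> = (4 * pi * ln (real n)) / real n * (1 / real n)" by (simp add: power2_eq_square)
  also have "\<dots> \<le> 1 * (1 / real n)"
    using n_big[OF n] n0 by (intro mult_right_mono) (auto simp: divide_le_eq)
  also have "\<dots> = exp (- ln (real n))" using n0 by (simp add: exp_minus inverse_eq_divide)
  finally show "ln (real n) \<le> a\<^sup>2" by simp
qed

theorem proposition3p14:
  shows "\<exists>C c :: real. \<exists>N0 :: nat. C > 0 \<and> c > 0 \<and>
    (\<forall>n \<ge> N0. \<forall>p :: real. p \<ge> 1 \<longrightarrow> p > c * ln (real n) \<longrightarrow>
       var (std_gaussian n) (lp_norm n p) \<le> C / ln (real n))"
proof (intro exI conjI allI impI)
  let ?CL = "exp 2 / std_normal_density 1"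
  have "0 < std_normal_density 1" by (simp add: normal_density_pos)
  then have "0 \<le> ?CL" by simp
  then show "0 < 128 * (4 + ?CL)"
    by (intro mult_pos_pos add_pos_nonneg) (assumption | simp)+
  show "(0::real) < 400" by simp
  fix n :: nat and p :: real
  assume n: "1024 \<le> n" and p1: "1 \<le> p" and pc: "400 * ln (real n) < p"
  obtain a where a1: "1 \<le> a" and aeq: "real n * std_normal_density a = a"
    using exists_a[OF n] by blast
  note ab = a_bounds[OF n a1 aeq]
  interpret S: setting n p a
    by unfold_locales (use a1 aeq ln_ge1[OF n] pc ab in auto)
  have "var (std_gaussian n) (lp_norm n p) \<le> 2 * (8/a)\<^sup>2 * (4 + S.CL)" by (rule S.VAR)
  also have "\<dots> = 128 * (4 + ?CL) / a\<^sup>2" unfolding S.CL_def by (simp add: power_divide)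
  also have "\<dots> \<le> 128 * (4 + ?CL) / ln (real n)"
    using ab(2) ln_ge1[OF n] a1 by (intro divide_left_mono) (auto simp: normal_density_pos intro!: mult_pos_pos)
  finally show "var (std_gaussian n) (lp_norm n p) \<le> 128 * (4 + ?CL) / ln (real n)" .
qed

end
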